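(* Let $X$ have the standard Cauchy distribution. Then the distribution function $F(x)=\frac{2}{\pi}\arctan(x)$, $x\ge0$, of $|X|$ satisfies $F\in\mathcal{S}_C$ but $F\notin\mathcal{H}$.
   Context: For a distribution function $G$, $G^{-1}(u)=\inf\{x\in\mathbb{R}:G(x)\ge u\}$ for $0<u<1$. For distribution functions $F,G$, write $F\le_{skew}G$ if the function $x\mapsto G^{-1}(F(x))$ is convex (on the set of $x$ with $0<F(x)<1$). $\mathcal{S}_C=\{G: F_C\le_{skew}G\}$ with $F_C(x)=\frac1\pi\arctan(x)+\frac12$, $x\in\mathbb{R}$. For the distribution function $F$ of a non-negative random variable define $h_F(x)=-\log(F(1/x))$, $x>0$; $\mathcal{H}$ is the class of distribution functions of non-negative random variables for which $h_F$ is subadditive, i.e. $h_F(x+y)\le h_F(x)+h_F(y)$ for all $x,y>0$. *)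

theory Defs
  imports "HOL-Analysis.Analysis"
begin

definition is_distr_fun :: "(real \<Rightarrow> real) \<Rightarrow> bool" where
  "is_distr_fun G \<longleftrightarrow> mono G \<and> (\<forall>x. continuous (at_right x) G)
     \<and> (G \<longlongrightarrow> 0) at_bot \<and> (G \<longlongrightarrow> 1) at_top"

definition gen_inv :: "(real \<Rightarrow> real) \<Rightarrow> real \<Rightarrow> real" where
  "gen_inv G u = Inf {x. G x \<ge> u}"

definition skew_le :: "(real \<Rightarrow> real) \<Rightarrow> (real \<Rightarrow> real) \<Rightarrow> bool" where
  "skew_le F G \<longleftrightarrow> convex_on {x. 0 < F x \<and> F x < 1} (\<lambda>x. gen_inv G (F x))"

definition F_C :: "real \<Rightarrow> real" where
  "F_C x = arctan x / pi + 1/2"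

definition S_C :: "(real \<Rightarrow> real) set" where
  "S_C = {G. is_distr_fun G \<and> skew_le F_C G}"

definition h_fun :: "(real \<Rightarrow> real) \<Rightarrow> real \<Rightarrow> ereal" where
  "h_fun F x = (if F (1/x) = 0 then \<infinity> else ereal (- ln (F (1/x))))"

definition H_class :: "(real \<Rightarrow> real) set" where
  "H_class = {F. is_distr_fun F \<and> (\<forall>x<0. F x = 0) \<and>
     (\<forall>x>0. \<forall>y>0. h_fun F (x + y) \<le> h_fun F x + h_fun F y)}"

end

theory Submission
  imports Defs
begin

lemma arctan_sqrt_id:
  fixes x :: real
  shows "tan (arctan x / 2 + pi/4) = x + sqrt (1 + x^2)"
proof -
  define r where "r = sqrt (1 + x^2)"
  define s where "s = x + r"
  have r2: "r^2 = 1 + x^2" unfolding r_def by simp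
  have "\<bar>x\<bar> = sqrt (x^2)" by simp
  also have "\<dots> < r" unfolding r_def by (rule real_sqrt_less_mono) simp
  finally have sq: "\<bar>x\<bar> < r" .
  hence spos: "s > 0" unfolding s_def by linarith
  have prod: "(r - x) * s = 1"
  proof -
    have "(r - x) * s = r^2 - x^2" unfolding s_def by (simp add: power2_eq_square algebra_simps)
    thus ?thesis using r2 by simp
  qed
  have inv: "inverse s = r - x"
    using prod spos by (metis inverse_unique mult.commute)
  have a1: "arctan (- inverse s) = - (pi/2 - arctan s)"
    using arctan_inverse[OF spos] arctan_minus by simp
  have b: "0 < arctan s" "arctan s < pi/2" using spos arctan_ubound by auto
  have "arctan s + arctan (- inverse s) = arctan ((s + - inverse s) / (1 - s * - inverse s))"
  proof (rule arctan_add_raw)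
    show "\<bar>arctan s + arctan (- inverse s)\<bar> < pi/2"
      unfolding a1 abs_less_iff using b by linarith
  qed
  also have "s * - inverse s = -1" using spos by simp
  also have "s + - inverse s = 2 * x"
  proof -
    have "s + - inverse s = s - (r - x)" using inv by simp
    thus ?thesis unfolding s_def by simp
  qed
  finally have "arctan s + arctan (- inverse s) = arctan x" by simp
  hence "arctan s = arctan x / 2 + pi/4" using a1 by simp
  hence "tan (arctan x / 2 + pi/4) = tan (arctan s)" by simp
  thus ?thesis by (simp add: s_def r_def tan_arctan)
qed

lemma convex_lin_sqrt: "convex_on UNIV (\<lambda>x::real. x + sqrt (1 + x^2))"
proof (rule convex_on_realI[where f' = "\<lambda>x. 1 + x / sqrt (1 + x^2)"])
  fix x :: real
  show "((\<lambda>x::real. x + sqrt (1 + x^2)) has_real_derivative 1 + x / sqrt (1 + x^2)) (at x)"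
    using add_pos_nonneg[OF zero_less_one zero_le_power2[of x]]
    by (auto intro!: derivative_eq_intros simp: field_simps)
next
  fix x y :: real assume "x \<le> y"
  have "x / sqrt (1 + x^2) = sin (arctan x)" by (simp add: sin_arctan)
  moreover have "y / sqrt (1 + y^2) = sin (arctan y)" by (simp add: sin_arctan)
  moreover have "sin (arctan x) \<le> sin (arctan y)"
    using \<open>x \<le> y\<close> arctan_bounded[of x] arctan_bounded[of y]
    by (intro sin_monotone_2pi_le) (auto simp: arctan_le_iff)
  ultimately show "1 + x / sqrt (1 + x^2) \<le> 1 + y / sqrt (1 + y^2)" by simp
qed auto


lemma F_distr:
  "is_distr_fun (\<lambda>x. if x \<ge> 0 then 2 / pi * arctan x else 0)" (is "is_distr_fun ?F")
  unfolding is_distr_fun_def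
proof (intro conjI allI)
  show "mono ?F"
  proof (rule monoI)
    fix x y :: real assume "x \<le> y"
    show "?F x \<le> ?F y"
      using \<open>x \<le> y\<close> arctan_le_iff[of x y]
      by (auto intro!: divide_right_mono)
  qed
next
  fix x :: real
  show "continuous (at_right x) ?F"
  proof (cases "x \<ge> 0")
    case True
    have "((\<lambda>y. 2 / pi * arctan y) \<longlongrightarrow> 2/pi * arctan x) (at_right x)"
      by (intro tendsto_intros)
    moreover have "eventually (\<lambda>y. 2 / pi * arctan y = ?F y) (at_right x)"
      using True by (auto simp: eventually_at_right_less intro: eventually_mono[OF eventually_at_right_less])
    ultimately have "(?F \<longlongrightarrow> ?F x) (at_right x)"
      using True by (auto intro: Lim_transform_eventually)
    thus ?thesis by (simp add: continuous_within)
  next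
    case False
    have "eventually (\<lambda>y. y < 0) (at_right x)"
      using False by (auto simp: eventually_at_right_field intro!: exI[of _ 0])
    hence "eventually (\<lambda>y. 0 = ?F y) (at_right x)"
      by (auto elim!: eventually_mono)
    hence "(?F \<longlongrightarrow> 0) (at_right x)"
      by (auto intro: Lim_transform_eventually)
    thus ?thesis using False by (simp add: continuous_within)
  qed
next
  have "eventually (\<lambda>y. 0 = ?F y) at_bot"
  proof -
    have "eventually (\<lambda>y::real. y \<le> -1) at_bot" by (rule eventually_le_at_bot)
    thus ?thesis by (rule eventually_mono) simp
  qed
  thus "(?F \<longlongrightarrow> 0) at_bot" by (auto intro: Lim_transform_eventually)
next
  have "((\<lambda>y. 2 / pi * arctan y) \<longlongrightarrow> 2/pi * (pi/2)) at_top"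
    by (intro tendsto_intros tendsto_arctan_at_top)
  hence "((\<lambda>y. 2 / pi * arctan y) \<longlongrightarrow> 1) at_top" by simp
  moreover have "eventually (\<lambda>y. 2 / pi * arctan y = ?F y) at_top"
    using eventually_ge_at_top[of "0::real"] by (auto elim!: eventually_mono)
  ultimately show "(?F \<longlongrightarrow> 1) at_top" by (auto intro: Lim_transform_eventually)
qed

lemma F_inv:
  fixes u :: real
  assumes "0 < u" "u < 1"
  shows "gen_inv (\<lambda>x. if x \<ge> 0 then 2 / pi * arctan x else 0) u = tan (pi * u / 2)"
proof -
  have t1: "0 < pi * u / 2" "pi * u / 2 < pi / 2" using assms by auto
  have tpos: "tan (pi * u / 2) > 0" using t1 by (intro tan_gt_zero) auto
  have "{x. (if x \<ge> 0 then 2 / pi * arctan x else 0) \<ge> u} = {tan (pi * u / 2)..}"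
  proof (intro set_eqI iffI)
    fix x assume "x \<in> {x. (if x \<ge> 0 then 2 / pi * arctan x else 0) \<ge> u}"
    hence x0: "x \<ge> 0" and "2 / pi * arctan x \<ge> u" using assms by (auto split: if_splits)
    hence "arctan x \<ge> pi * u / 2" by (simp add: field_simps)
    moreover have at: "arctan (tan (pi * u / 2)) = pi * u / 2" using t1 by (intro arctan_tan; linarith)
    ultimately have "arctan x \<ge> arctan (tan (pi * u / 2))" by simp
    thus "x \<in> {tan (pi * u / 2)..}" by (simp add: arctan_le_iff)
  next
    fix x assume "x \<in> {tan (pi * u / 2)..}"
    hence xt: "x \<ge> tan (pi * u / 2)" by simp
    hence x0: "x \<ge> 0" using tpos by linarith
    have "arctan x \<ge> arctan (tan (pi * u / 2))" using xt by (simp add: arctan_le_iff)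
    moreover have at: "arctan (tan (pi * u / 2)) = pi * u / 2" using t1 by (intro arctan_tan; linarith)
    ultimately have "arctan x \<ge> pi * u / 2" by simp
    hence "2 / pi * arctan x \<ge> u" by (simp add: field_simps)
    thus "x \<in> {x. (if x \<ge> 0 then 2 / pi * arctan x else 0) \<ge> u}" using x0 by simp
  qed
  thus ?thesis unfolding gen_inv_def by simp
qed

lemma F_skew: "skew_le F_C (\<lambda>x. if x \<ge> 0 then 2 / pi * arctan x else 0)"
proof -
  have FC: "0 < F_C x \<and> F_C x < 1" for x
    using arctan_bounded[of x] by (auto simp: F_C_def field_simps)
  have set: "{x. 0 < F_C x \<and> F_C x < 1} = UNIV" using FC by auto
  have eq: "gen_inv (\<lambda>x. if x \<ge> 0 then 2 / pi * arctan x else 0) (F_C x) = x + sqrt (1 + x^2)" for x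
  proof -
    have "pi * F_C x / 2 = arctan x / 2 + pi/4" by (simp add: F_C_def field_simps)
    thus ?thesis using F_inv[of "F_C x"] FC[of x] arctan_sqrt_id[of x] by metis
  qed
  show ?thesis unfolding skew_le_def set eq using convex_lin_sqrt by simp
qed

lemma F_notH: "(\<lambda>x. if x \<ge> 0 then 2 / pi * arctan x else 0) \<notin> H_class" (is "?F \<notin> _")
proof
  assume "?F \<in> H_class"
  hence "\<forall>x>0. \<forall>y>0. h_fun ?F (x + y) \<le> h_fun ?F x + h_fun ?F y"
    unfolding H_class_def by auto
  hence sub: "h_fun ?F (1/10 + 1/10) \<le> h_fun ?F (1/10) + h_fun ?F (1/10)"
    by (meson divide_pos_pos zero_less_one zero_less_numeral)
  have a: "arctan (1/10) \<le> 1/10" by (rule arctan_le_self) simp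
  have b: "1/5 - (1/5)^3/3 \<le> arctan (1/5)"
    using arctan_lower_bound[of "1/5" 1] by (simp add: numeral_eq_Suc)
  have e10: "arctan 10 = pi/2 - arctan (1/10)"
    using arctan_inverse[of 10] by (simp add: inverse_eq_divide)
  have e5: "arctan 5 = pi/2 - arctan (1/5)"
    using arctan_inverse[of 5] by (simp add: inverse_eq_divide)
  define A where "A = 2 / pi * arctan 10"
  define B where "B = 2 / pi * arctan 5"
  have Apos: "A > 0" "B > 0" unfolding A_def B_def by auto
  have hA: "h_fun ?F (1/10) = ereal (- ln A)" unfolding h_fun_def A_def using Apos(1) by (simp add: A_def)
  have hB: "h_fun ?F (1/10 + 1/10) = ereal (- ln B)" unfolding h_fun_def B_def using Apos(2) by (simp add: B_def)
  have A1: "A = 1 - 2/pi * arctan (1/10)" unfolding A_def e10 by (simp add: field_simps)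
  have B1: "B = 1 - 2/pi * arctan (1/5)" unfolding B_def e5 by (simp add: field_simps)
  have pi4: "pi < 4" "pi > 3" using pi_less_4 pi_gt3 by auto
  have "1 - 2/pi * (1/10) \<le> A" unfolding A1 using a pi4 by (simp add: field_simps)
  moreover have "0 \<le> 1 - 2/pi * (1/10)" using pi4 by (simp add: field_simps)
  ultimately have "(1 - 2/pi * (1/10))^2 \<le> A^2" by (intro power_mono)
  moreover have "B < (1 - 2/pi * (1/10))^2"
  proof -
    have "B \<le> 1 - 2/pi * (1/5 - (1/5)^3/3)" unfolding B1 using b pi4 by (simp add: field_simps)
    also have "\<dots> < (1 - 2/pi * (1/10))^2"
      using pi4 by (simp add: field_simps power2_eq_square)
    finally show ?thesis .
  qed
  ultimately have BA: "B < A * A" by (simp add: power2_eq_square)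
  have "ln B < ln (A * A)" using BA Apos by simp
  hence "- ln A + - ln A < - ln B" using Apos by (simp add: ln_mult)
  hence "h_fun ?F (1/10) + h_fun ?F (1/10) < h_fun ?F (1/10 + 1/10)"
    unfolding hA hB by simp
  thus False using sub by simp
qed


theorem mainTheorem9:
  fixes F :: "real \<Rightarrow> real"
  defines "F \<equiv> (\<lambda>x. if x \<ge> 0 then 2 / pi * arctan x else 0)"
  shows "F \<in> S_C \<and> F \<notin> H_class"
  unfolding F_def S_C_def using F_distr F_skew F_notH by blast

end
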